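(* Let $G$ be a connected planar trivalent graph with a perfect matching $M$. If $G$ contains a bridge, then $\langle G:M\rangle_2(1)=0$ and $|G:M|_2=0$.
   Context: Graphs are finite and may have multiple edges; trivalent means every vertex has degree $3$. A bridge is an edge whose removal disconnects the graph. $|G:M|_2$ denotes the number of $2$-factors (spanning subgraphs in which every vertex has degree $2$) of $G$ containing every edge of $M$. The $2$-factor polynomial $\langle G:M\rangle_2(z)\in\mathbb{Z}[z,z^{-1}]$ is defined as follows. Embed $G$ in the $2$-sphere. For a matching edge $e=uv$, let $\alpha,\beta$ be the other two edge-ends at $u$ and $\gamma,\delta$ the other two at $v$, labelled so that in a small disk around $e$ they appear in cyclic order $\alpha,\beta,\delta,\gamma$. The $0$-resolution at $e$ deletes $e,u,v$ and joins $\alpha$ to $\gamma$ and $\beta$ to $\delta$ by disjoint arcs; the $1$-resolution joins $\alpha$ to $\delta$ and $\beta$ to $\gamma$ by two arcs crossing once. For a state $s:M\to\{0,1\}$, resolving every matching edge accordingly yields $c(s)$ immersed closed curves, and $\langle G:M\rangle_2(z)=\sum_s(-z)^{|s|}(z+z^{-1})^{c(s)}$, where $|s|$ is the number of edges assigned $1$. This is independent of the chosen embedding. *)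

theory Defs
  imports Complex_Main
begin

text \<open>A finite trivalent multigraph embedded in an oriented closed surface is encoded
as a combinatorial map (rotation system) on a finite set D of darts (half-edges):
alpha is the fixed-point-free involution pairing the two darts of an edge, sigma is the
rotation permutation whose orbits (all of size 3) are the vertices, and the faces are
the orbits of sigma o alpha.\<close>

definition trivalent_map :: "'d set \<Rightarrow> ('d \<Rightarrow> 'd) \<Rightarrow> ('d \<Rightarrow> 'd) \<Rightarrow> bool" where
  "trivalent_map D \<alpha> \<sigma> \<longleftrightarrow> finite D \<and> D \<noteq> {} \<and>
     (\<forall>d\<in>D. \<alpha> d \<in> D \<and> \<alpha> d \<noteq> d \<and> \<alpha> (\<alpha> d) = d) \<and>
     (\<forall>d\<in>D. \<sigma> d \<in> D \<and> \<sigma> d \<noteq> d \<and> \<sigma> (\<sigma> d) \<noteq> d \<and> \<sigma> (\<sigma> (\<sigma> d)) = d)"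

definition vert :: "('d \<Rightarrow> 'd) \<Rightarrow> 'd \<Rightarrow> 'd set" where
  "vert \<sigma> d = {d, \<sigma> d, \<sigma> (\<sigma> d)}"

definition orbits :: "'d set \<Rightarrow> ('d \<Rightarrow> 'd) \<Rightarrow> 'd set set" where
  "orbits D f = D // ({(x, f x) | x. x \<in> D}\<^sup>*)"

text \<open>connectivity of the graph whose edges are given by the set E of darts
(darts of a common vertex are always joined)\<close>
definition dart_conn :: "'d set \<Rightarrow> ('d \<Rightarrow> 'd) \<Rightarrow> ('d \<Rightarrow> 'd) \<Rightarrow> 'd set \<Rightarrow> ('d \<times> 'd) set" where
  "dart_conn D \<alpha> \<sigma> E =
     (let R = {(x, \<sigma> x) | x. x \<in> D} \<union> {(x, \<alpha> x) | x. x \<in> E} in (R \<union> R\<inverse>)\<^sup>*)"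

definition connected_map :: "'d set \<Rightarrow> ('d \<Rightarrow> 'd) \<Rightarrow> ('d \<Rightarrow> 'd) \<Rightarrow> bool" where
  "connected_map D \<alpha> \<sigma> \<longleftrightarrow> (\<forall>x\<in>D. \<forall>y\<in>D. (x, y) \<in> dart_conn D \<alpha> \<sigma> D)"

text \<open>embedding in the 2-sphere: Euler characteristic V - E + F = 2 (connected map)\<close>
definition planar_map :: "'d set \<Rightarrow> ('d \<Rightarrow> 'd) \<Rightarrow> ('d \<Rightarrow> 'd) \<Rightarrow> bool" where
  "planar_map D \<alpha> \<sigma> \<longleftrightarrow>
     int (card (orbits D \<sigma>)) - int (card (orbits D \<alpha>)) + int (card (orbits D (\<sigma> \<circ> \<alpha>))) = 2"

definition has_bridge :: "'d set \<Rightarrow> ('d \<Rightarrow> 'd) \<Rightarrow> ('d \<Rightarrow> 'd) \<Rightarrow> bool" where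
  "has_bridge D \<alpha> \<sigma> \<longleftrightarrow> (\<exists>d\<in>D. \<exists>x\<in>D. \<exists>y\<in>D.
      (x, y) \<notin> dart_conn D \<alpha> \<sigma> (D - {d, \<alpha> d}))"

definition perfect_matching :: "'d set \<Rightarrow> ('d \<Rightarrow> 'd) \<Rightarrow> ('d \<Rightarrow> 'd) \<Rightarrow> 'd set \<Rightarrow> bool" where
  "perfect_matching D \<alpha> \<sigma> Md \<longleftrightarrow> Md \<subseteq> D \<and> (\<forall>d\<in>Md. \<alpha> d \<in> Md) \<and>
     (\<forall>d\<in>D. card (vert \<sigma> d \<inter> Md) = 1)"

text \<open>|G:M|_2 : number of 2-factors (edge sets, i.e. alpha-closed dart sets, with every
vertex of degree 2) containing all edges of M\<close>
definition two_factor_count :: "'d set \<Rightarrow> ('d \<Rightarrow> 'd) \<Rightarrow> ('d \<Rightarrow> 'd) \<Rightarrow> 'd set \<Rightarrow> nat" where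
  "two_factor_count D \<alpha> \<sigma> Md = card {F. F \<subseteq> D \<and> (\<forall>x\<in>F. \<alpha> x \<in> F) \<and> Md \<subseteq> F \<and>
      (\<forall>d\<in>D. card (vert \<sigma> d \<inter> F) = 2)}"

definition match_edges :: "('d \<Rightarrow> 'd) \<Rightarrow> 'd set \<Rightarrow> 'd set set" where
  "match_edges \<alpha> Md = {{d, \<alpha> d} | d. d \<in> Md}"

definition mdart :: "('d \<Rightarrow> 'd) \<Rightarrow> 'd set \<Rightarrow> 'd \<Rightarrow> 'd" where
  "mdart \<sigma> Md x = (THE m. m \<in> Md \<and> m \<in> vert \<sigma> x)"

text \<open>Resolution at matching edge e = {m, alpha m} (m at u, alpha m at v): with
a = sigma m, b = sigma^2 m, d = sigma (alpha m), c = sigma^2 (alpha m), these appear in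
cyclic order a, b, d, c around e. The 0-resolution joins a-c and b-d, the 1-resolution
(for edges in S) joins a-d and b-c. res_partner gives the end joined to a non-matching
dart x.\<close>
definition res_partner :: "('d \<Rightarrow> 'd) \<Rightarrow> ('d \<Rightarrow> 'd) \<Rightarrow> 'd set \<Rightarrow> 'd set set \<Rightarrow> 'd \<Rightarrow> 'd" where
  "res_partner \<alpha> \<sigma> Md S x =
     (let m = mdart \<sigma> Md x in
      if x = \<sigma> m then (if {m, \<alpha> m} \<in> S then \<sigma> (\<alpha> m) else \<sigma> (\<sigma> (\<alpha> m)))
      else (if {m, \<alpha> m} \<in> S then \<sigma> (\<sigma> (\<alpha> m)) else \<sigma> (\<alpha> m)))"

text \<open>number c(s) of closed curves in the resolution where the edges in S get 1:
components of the non-matching darts linked along non-matching edges and along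
resolution arcs\<close>
definition num_curves :: "'d set \<Rightarrow> ('d \<Rightarrow> 'd) \<Rightarrow> ('d \<Rightarrow> 'd) \<Rightarrow> 'd set \<Rightarrow> 'd set set \<Rightarrow> nat" where
  "num_curves D \<alpha> \<sigma> Md S =
     (let N = D - Md;
          R = {(x, \<alpha> x) | x. x \<in> N} \<union> {(x, res_partner \<alpha> \<sigma> Md S x) | x. x \<in> N}
      in card (N // ((R \<union> R\<inverse>)\<^sup>*)))"

definition two_factor_poly :: "'d set \<Rightarrow> ('d \<Rightarrow> 'd) \<Rightarrow> ('d \<Rightarrow> 'd) \<Rightarrow> 'd set \<Rightarrow> real \<Rightarrow> real" where
  "two_factor_poly D \<alpha> \<sigma> Md z =
     (\<Sum>S\<in>Pow (match_edges \<alpha> Md). (- z) ^ card S * (z + 1 / z) ^ num_curves D \<alpha> \<sigma> Md S)"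

end

theory Submission
  imports Defs
begin


lemma invol_even:
  assumes "finite X" "\<forall>x\<in>X. f x \<in> X \<and> f x \<noteq> x \<and> f (f x) = x"
  shows "even (card X)"
  using assms
proof (induction "card X" arbitrary: X rule: less_induct)
  case less
  show ?case
  proof (cases "X = {}")
    case True then show ?thesis by simp
  next
    case False
    then obtain x where x: "x \<in> X" by blast
    let ?Y = "X - {x, f x}"
    have fx: "f x \<in> X" "f x \<noteq> x" using less.prems x by auto
    have cY: "card ?Y = card X - 2" using x fx less.prems(1) by (simp add: card_Diff_subset)
    have cX: "card X \<ge> 2"
    proof -
      have "{x, f x} \<subseteq> X" using x fx by auto
      then have "card {x, f x} \<le> card X" using card_mono[OF less.prems(1)] by blast
      then show ?thesis using fx by simp
    qed
    have "even (card ?Y)"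
    proof (rule less.hyps)
      show "card ?Y < card X" using cY cX by simp
      show "finite ?Y" using less.prems by simp
      show "\<forall>y\<in>?Y. f y \<in> ?Y \<and> f y \<noteq> y \<and> f (f y) = y"
        using less.prems(2) x by (metis Diff_iff insertCI insertE singletonD)
    qed
    then show ?thesis using cY cX by simp
  qed
qed

locale tm =
  fixes D :: "'d set" and \<alpha> \<sigma> :: "'d \<Rightarrow> 'd" and Md :: "'d set"
  assumes tri: "trivalent_map D \<alpha> \<sigma>" and pm: "perfect_matching D \<alpha> \<sigma> Md"
begin

lemma finD: "finite D" using tri unfolding trivalent_map_def by auto
lemma a_in: "d \<in> D \<Longrightarrow> \<alpha> d \<in> D" using tri unfolding trivalent_map_def by auto
lemma a_ne: "d \<in> D \<Longrightarrow> \<alpha> d \<noteq> d" using tri unfolding trivalent_map_def by auto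
lemma aa: "d \<in> D \<Longrightarrow> \<alpha> (\<alpha> d) = d" using tri unfolding trivalent_map_def by auto
lemma s_in: "d \<in> D \<Longrightarrow> \<sigma> d \<in> D" using tri unfolding trivalent_map_def by auto
lemma s_ne: "d \<in> D \<Longrightarrow> \<sigma> d \<noteq> d" using tri unfolding trivalent_map_def by auto
lemma s2_ne: "d \<in> D \<Longrightarrow> \<sigma> (\<sigma> d) \<noteq> d" using tri unfolding trivalent_map_def by auto
lemma s3: "d \<in> D \<Longrightarrow> \<sigma> (\<sigma> (\<sigma> d)) = d" using tri unfolding trivalent_map_def by auto
lemma s2_ne1: "d \<in> D \<Longrightarrow> \<sigma> (\<sigma> d) \<noteq> \<sigma> d" using s_ne s_in by auto
lemma Md_D: "Md \<subseteq> D" using pm unfolding perfect_matching_def by auto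
lemma Md_a: "d \<in> Md \<Longrightarrow> \<alpha> d \<in> Md" using pm unfolding perfect_matching_def by auto
lemma Md_card: "d \<in> D \<Longrightarrow> card (vert \<sigma> d \<inter> Md) = 1" using pm unfolding perfect_matching_def by auto

lemma vert_D: "d \<in> D \<Longrightarrow> vert \<sigma> d \<subseteq> D" unfolding vert_def using s_in by auto

lemma vert_eq: "d \<in> D \<Longrightarrow> y \<in> vert \<sigma> d \<Longrightarrow> vert \<sigma> y = vert \<sigma> d"
proof -
  assume d: "d \<in> D" and y: "y \<in> vert \<sigma> d"
  have e1: "\<sigma> (\<sigma> (\<sigma> d)) = d" using s3 d by blast
  have e2: "\<sigma> (\<sigma> (\<sigma> (\<sigma> d))) = \<sigma> d" using e1 by simp
  from y have "y = d \<or> y = \<sigma> d \<or> y = \<sigma> (\<sigma> d)" unfolding vert_def by blast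
  then show ?thesis
  proof (elim disjE)
    assume "y = \<sigma> d" then show ?thesis unfolding vert_def using e1 by auto
  next
    assume "y = \<sigma> (\<sigma> d)" then show ?thesis unfolding vert_def using e1 e2 by auto
  qed simp
qed

lemma md_unique: "d \<in> D \<Longrightarrow> m1 \<in> Md \<Longrightarrow> m1 \<in> vert \<sigma> d \<Longrightarrow> m2 \<in> Md \<Longrightarrow> m2 \<in> vert \<sigma> d \<Longrightarrow> m1 = m2"
proof -
  assume a: "d \<in> D" "m1 \<in> Md" "m1 \<in> vert \<sigma> d" "m2 \<in> Md" "m2 \<in> vert \<sigma> d"
  obtain z where z: "vert \<sigma> d \<inter> Md = {z}" using Md_card[OF a(1)] card_1_singletonE by blast
  have "m1 \<in> {z}" "m2 \<in> {z}" using a z by blast+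
  then show ?thesis by simp
qed

lemma md_ex: "d \<in> D \<Longrightarrow> \<exists>m\<in>Md. m \<in> vert \<sigma> d"
proof -
  assume a: "d \<in> D"
  obtain z where z: "vert \<sigma> d \<inter> Md = {z}" using Md_card[OF a(1)] card_1_singletonE by blast
  then have "z \<in> Md" "z \<in> vert \<sigma> d" by blast+
  then show ?thesis by blast
qed

lemma mdart_eq: "d \<in> D \<Longrightarrow> m \<in> Md \<Longrightarrow> m \<in> vert \<sigma> d \<Longrightarrow> mdart \<sigma> Md d = m"
  unfolding mdart_def
  apply (rule the_equality)
   apply blast
  using md_unique by blast

lemma mdart_in: "d \<in> D \<Longrightarrow> mdart \<sigma> Md d \<in> Md \<and> mdart \<sigma> Md d \<in> vert \<sigma> d"
proof -
  assume d: "d \<in> D"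
  obtain m where "m \<in> Md" "m \<in> vert \<sigma> d" using md_ex[OF d] by blast
  then show ?thesis using mdart_eq[OF d] by simp
qed

lemma card_vert: "d \<in> D \<Longrightarrow> card (vert \<sigma> d) = 3"
  unfolding vert_def using s_ne[of d] s2_ne[of d] s2_ne1[of d] by simp

lemma self_vert: "d \<in> vert \<sigma> d" unfolding vert_def by simp
lemma svert: "\<sigma> d \<in> vert \<sigma> d" unfolding vert_def by simp
lemma ssvert: "\<sigma> (\<sigma> d) \<in> vert \<sigma> d" unfolding vert_def by simp

lemma not_loop: "m \<in> Md \<Longrightarrow> \<alpha> m \<notin> vert \<sigma> m"
proof
  assume m: "m \<in> Md" "\<alpha> m \<in> vert \<sigma> m"
  have mD: "m \<in> D" using m Md_D by blast
  have "\<alpha> m = m" using md_unique[OF mD Md_a[OF m(1)] m(2) m(1) self_vert] .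
  then show False using a_ne mD by blast
qed

lemma vert_disj: "m \<in> Md \<Longrightarrow> y \<in> vert \<sigma> m \<Longrightarrow> y \<in> vert \<sigma> (\<alpha> m) \<Longrightarrow> False"
proof -
  assume m: "m \<in> Md" "y \<in> vert \<sigma> m" "y \<in> vert \<sigma> (\<alpha> m)"
  have mD: "m \<in> D" using m Md_D by blast
  have amD: "\<alpha> m \<in> D" using a_in mD by blast
  have "vert \<sigma> m = vert \<sigma> y" using vert_eq[OF mD m(2)] by simp
  also have "\<dots> = vert \<sigma> (\<alpha> m)" using vert_eq[OF amD m(3)] by simp
  finally have "\<alpha> m \<in> vert \<sigma> m" using self_vert by simp
  then show False using not_loop m by blast
qed

lemma N_a: "x \<in> D - Md \<Longrightarrow> \<alpha> x \<in> D - Md"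
proof -
  assume x: "x \<in> D - Md"
  have "\<alpha> x \<notin> Md"
  proof
    assume "\<alpha> x \<in> Md"
    then have "\<alpha> (\<alpha> x) \<in> Md" by (rule Md_a)
    then show False using aa x by simp
  qed
  then show ?thesis using a_in x by simp
qed

lemma N_cases: "x \<in> D - Md \<Longrightarrow> x = \<sigma> (mdart \<sigma> Md x) \<or> x = \<sigma> (\<sigma> (mdart \<sigma> Md x))"
proof -
  assume x: "x \<in> D - Md"
  let ?m = "mdart \<sigma> Md x"
  have m: "?m \<in> Md" "?m \<in> vert \<sigma> x" using mdart_in x by auto
  have "x \<in> vert \<sigma> ?m" using vert_eq[of x ?m] m x self_vert by auto
  then show ?thesis using m x unfolding vert_def by auto
qed

definition tau :: "'d set \<Rightarrow> 'd \<Rightarrow> 'd" where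
  "tau X x = (if \<sigma> x \<in> X then \<sigma> x else \<sigma> (\<sigma> x))"

lemma tau_prop:
  assumes two: "\<forall>d\<in>D. card (vert \<sigma> d \<inter> X) = 2" and x: "x \<in> X" "x \<in> D"
  shows "tau X x \<in> X \<and> tau X x \<noteq> x \<and> tau X (tau X x) = x \<and> tau X x \<in> vert \<sigma> x"
proof -
  have c: "card (vert \<sigma> x \<inter> X) = 2" using two x by auto
  have d: "\<sigma> x \<noteq> x" "\<sigma> (\<sigma> x) \<noteq> x" "\<sigma> (\<sigma> x) \<noteq> \<sigma> x" using s_ne s2_ne s2_ne1 x by auto
  have s3x: "\<sigma> (\<sigma> (\<sigma> x)) = x" using s3 x by auto
  show ?thesis
  proof (cases "\<sigma> x \<in> X")
    case True
    have "\<sigma> (\<sigma> x) \<notin> X"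
    proof
      assume "\<sigma> (\<sigma> x) \<in> X"
      then have "vert \<sigma> x \<inter> X = {x, \<sigma> x, \<sigma> (\<sigma> x)}" using True x unfolding vert_def by auto
      then show False using c d by simp
    qed
    then have "tau X x = \<sigma> x" "tau X (\<sigma> x) = x" using True s3x unfolding tau_def by auto
    then show ?thesis using True d svert by simp
  next
    case False
    have "\<sigma> (\<sigma> x) \<in> X"
    proof (rule ccontr)
      assume "\<sigma> (\<sigma> x) \<notin> X"
      then have "vert \<sigma> x \<inter> X = {x}" using False x unfolding vert_def by auto
      then show False using c by simp
    qed
    then have "tau X x = \<sigma> (\<sigma> x)" "tau X (\<sigma> (\<sigma> x)) = x" using False s3x x unfolding tau_def by auto
    then show ?thesis using \<open>\<sigma> (\<sigma> x) \<in> X\<close> d ssvert by simp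
  qed
qed

lemma even_closed:
  assumes two: "\<forall>d\<in>D. card (vert \<sigma> d \<inter> X) = 2" and XD: "X \<subseteq> D"
    and A: "A \<subseteq> D" "\<forall>x\<in>A. vert \<sigma> x \<subseteq> A"
  shows "even (card (A \<inter> X))"
proof (rule invol_even[where f = "tau X"])
  show "finite (A \<inter> X)" using finD A finite_subset by blast
  show "\<forall>x\<in>A \<inter> X. tau X x \<in> A \<inter> X \<and> tau X x \<noteq> x \<and> tau X (tau X x) = x"
    using tau_prop[OF two] A XD by blast
qed

lemma two_NMd: "\<forall>d\<in>D. card (vert \<sigma> d \<inter> (D - Md)) = 2"
proof
  fix d assume d: "d \<in> D"
  have "vert \<sigma> d \<inter> (D - Md) = vert \<sigma> d - (vert \<sigma> d \<inter> Md)" using vert_D d by auto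
  moreover have "finite (vert \<sigma> d \<inter> Md)" using finD vert_D[OF d] finite_subset by blast
  ultimately show "card (vert \<sigma> d \<inter> (D - Md)) = 2"
    using card_Diff_subset[of "vert \<sigma> d \<inter> Md" "vert \<sigma> d"] card_vert[OF d] Md_card[OF d]
    by simp
qed

end


lemma sym_cl: "(x, y) \<in> (R \<union> R\<inverse>)\<^sup>* \<Longrightarrow> (y, x) \<in> (R \<union> R\<inverse>)\<^sup>*"
  by (meson sym_Un_converse sym_rtrancl symD)

context tm
begin

lemma dc_sym: "(x, y) \<in> dart_conn D \<alpha> \<sigma> E \<Longrightarrow> (y, x) \<in> dart_conn D \<alpha> \<sigma> E"
  unfolding dart_conn_def Let_def by (rule sym_cl)

lemma dc_trans: "(x, y) \<in> dart_conn D \<alpha> \<sigma> E \<Longrightarrow> (y, z) \<in> dart_conn D \<alpha> \<sigma> E \<Longrightarrow> (x, z) \<in> dart_conn D \<alpha> \<sigma> E"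
  unfolding dart_conn_def Let_def by (rule rtrancl_trans)

lemma dc_refl: "(x, x) \<in> dart_conn D \<alpha> \<sigma> E"
  unfolding dart_conn_def Let_def by simp

lemma dc_s: "x \<in> D \<Longrightarrow> (x, \<sigma> x) \<in> dart_conn D \<alpha> \<sigma> E"
  unfolding dart_conn_def Let_def by (rule r_into_rtrancl) blast

lemma dc_a: "x \<in> E \<Longrightarrow> (x, \<alpha> x) \<in> dart_conn D \<alpha> \<sigma> E"
  unfolding dart_conn_def Let_def by (rule r_into_rtrancl) blast

lemma dc_vert: "x \<in> D \<Longrightarrow> y \<in> vert \<sigma> x \<Longrightarrow> (x, y) \<in> dart_conn D \<alpha> \<sigma> E"
proof -
  assume x: "x \<in> D" "y \<in> vert \<sigma> x"
  have 1: "(x, \<sigma> x) \<in> dart_conn D \<alpha> \<sigma> E" using dc_s x by blast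
  have 2: "(\<sigma> x, \<sigma> (\<sigma> x)) \<in> dart_conn D \<alpha> \<sigma> E" using dc_s s_in x by blast
  from x(2) have "y = x \<or> y = \<sigma> x \<or> y = \<sigma> (\<sigma> x)" unfolding vert_def by blast
  then show ?thesis
  proof (elim disjE)
    assume "y = \<sigma> (\<sigma> x)" then show ?thesis using dc_trans[OF 1 2] by simp
  qed (use 1 dc_refl in simp_all)
qed

lemma bridge_sep:
  assumes cm: "connected_map D \<alpha> \<sigma>" and d0: "d0 \<in> D" and xy: "x \<in> D" "y \<in> D"
    and nc: "(x, y) \<notin> dart_conn D \<alpha> \<sigma> (D - {d0, \<alpha> d0})"
  shows "(d0, \<alpha> d0) \<notin> dart_conn D \<alpha> \<sigma> (D - {d0, \<alpha> d0})"
proof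
  let ?E = "D - {d0, \<alpha> d0}"
  let ?C = "dart_conn D \<alpha> \<sigma> ?E"
  assume h: "(d0, \<alpha> d0) \<in> ?C"
  define R where "R = {(x, \<sigma> x) | x. x \<in> D} \<union> {(x, \<alpha> x) | x. x \<in> D}"
  have RC: "R \<subseteq> ?C"
  proof
    fix p assume "p \<in> R"
    then obtain u where "u \<in> D" "p = (u, \<sigma> u) \<or> p = (u, \<alpha> u)" unfolding R_def by blast
    moreover have "(u, \<alpha> u) \<in> ?C" if "u \<in> D"
    proof (cases "u \<in> ?E")
      case True then show ?thesis by (rule dc_a)
    next
      case False
      then have "u = d0 \<or> u = \<alpha> d0" using that by blast
      then show ?thesis
      proof
        assume "u = \<alpha> d0"
        then show ?thesis using dc_sym[OF h] aa[OF d0] by simp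
      qed (use h in simp)
    qed
    ultimately show "p \<in> ?C" using dc_s by blast
  qed
  have RC2: "R \<union> R\<inverse> \<subseteq> ?C" using RC dc_sym by blast
  have "(u, v) \<in> ?C" if "(u, v) \<in> (R \<union> R\<inverse>)\<^sup>*" for u v
    using that
  proof (induction rule: rtrancl_induct)
    case base then show ?case by (rule dc_refl)
  next
    case (step y z) then show ?case using RC2 dc_trans by blast
  qed
  then have "(R \<union> R\<inverse>)\<^sup>* \<subseteq> ?C" by auto
  moreover have "(x, y) \<in> (R \<union> R\<inverse>)\<^sup>*" using cm xy unfolding connected_map_def dart_conn_def Let_def R_def by blast
  ultimately show False using nc by blast
qed

definition cls :: "'d \<Rightarrow> 'd set" where
  "cls m0 = {x \<in> D. (m0, x) \<in> dart_conn D \<alpha> \<sigma> (D - {m0, \<alpha> m0})}"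

lemma cls_D: "cls m0 \<subseteq> D" unfolding cls_def by blast

lemma cls_vert: "x \<in> cls m0 \<Longrightarrow> vert \<sigma> x \<subseteq> cls m0"
proof
  fix y assume x: "x \<in> cls m0" and y: "y \<in> vert \<sigma> x"
  have xD: "x \<in> D" and c: "(m0, x) \<in> dart_conn D \<alpha> \<sigma> (D - {m0, \<alpha> m0})" using x unfolding cls_def by auto
  have "(x, y) \<in> dart_conn D \<alpha> \<sigma> (D - {m0, \<alpha> m0})" using dc_vert[OF xD y] .
  then have "(m0, y) \<in> dart_conn D \<alpha> \<sigma> (D - {m0, \<alpha> m0})" using dc_trans[OF c] by blast
  moreover have "y \<in> D" using vert_D[OF xD] y by blast
  ultimately show "y \<in> cls m0" unfolding cls_def by blast
qed

lemma cls_self: "m0 \<in> D \<Longrightarrow> m0 \<in> cls m0" unfolding cls_def using dc_refl by blast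

lemma cls_am: "(m0, \<alpha> m0) \<notin> dart_conn D \<alpha> \<sigma> (D - {m0, \<alpha> m0}) \<Longrightarrow> \<alpha> m0 \<notin> cls m0"
  unfolding cls_def by blast

lemma cls_alpha:
  assumes nb: "(m0, \<alpha> m0) \<notin> dart_conn D \<alpha> \<sigma> (D - {m0, \<alpha> m0})" and m0: "m0 \<in> D"
    and x: "x \<in> cls m0" "x \<noteq> m0"
  shows "\<alpha> x \<in> cls m0 \<and> \<alpha> x \<noteq> m0"
proof -
  have xD: "x \<in> D" using x cls_D by blast
  have "x \<noteq> \<alpha> m0" using cls_am[OF nb] x by blast
  then have "x \<in> D - {m0, \<alpha> m0}" using x xD by blast
  then have "(x, \<alpha> x) \<in> dart_conn D \<alpha> \<sigma> (D - {m0, \<alpha> m0})" by (rule dc_a)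
  then have "\<alpha> x \<in> cls m0" using x a_in[OF xD] dc_trans unfolding cls_def by blast
  moreover have "\<alpha> x \<noteq> m0"
  proof
    assume "\<alpha> x = m0"
    then have "x = \<alpha> m0" using aa xD by metis
    then show False using \<open>x \<noteq> \<alpha> m0\<close> by blast
  qed
  ultimately show ?thesis by blast
qed

lemma odd_Y:
  assumes nb: "(m0, \<alpha> m0) \<notin> dart_conn D \<alpha> \<sigma> (D - {m0, \<alpha> m0})" and m0: "m0 \<in> D"
    and Y: "Y \<subseteq> cls m0" "m0 \<in> Y" "\<forall>x\<in>Y. x \<noteq> m0 \<longrightarrow> \<alpha> x \<in> Y"
  shows "odd (card Y)"
proof -
  have fY: "finite Y" using finite_subset[OF Y(1) finite_subset[OF cls_D finD]] .
  have "even (card (Y - {m0}))"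
  proof (rule invol_even)
    show "finite (Y - {m0})" using fY by simp
    show "\<forall>x\<in>Y - {m0}. \<alpha> x \<in> Y - {m0} \<and> \<alpha> x \<noteq> x \<and> \<alpha> (\<alpha> x) = x"
    proof
      fix x assume x: "x \<in> Y - {m0}"
      then have xD: "x \<in> D" using Y cls_D by blast
      have "x \<in> cls m0" "x \<noteq> m0" using x Y(1) by auto
      then have "\<alpha> x \<noteq> m0" using cls_alpha[OF nb m0] by blast
      moreover have "\<alpha> x \<in> Y" using Y(3) x by blast
      ultimately show "\<alpha> x \<in> Y - {m0} \<and> \<alpha> x \<noteq> x \<and> \<alpha> (\<alpha> x) = x"
        using a_ne[OF xD] aa[OF xD] by blast
    qed
  qed
  moreover have "card Y = Suc (card (Y - {m0}))" using card_Suc_Diff1[OF fY Y(2)] by simp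
  ultimately show ?thesis by simp
qed

lemma bridge_in_Md:
  assumes nb: "(m0, \<alpha> m0) \<notin> dart_conn D \<alpha> \<sigma> (D - {m0, \<alpha> m0})" and m0: "m0 \<in> D"
  shows "m0 \<in> Md"
proof (rule ccontr)
  assume nm: "m0 \<notin> Md"
  let ?A = "cls m0"
  have fA: "finite ?A" using finite_subset[OF cls_D finD] .
  have oA: "odd (card ?A)"
    using odd_Y[OF nb m0, of ?A] cls_self[OF m0] cls_alpha[OF nb m0] by blast
  have e1: "even (card (?A \<inter> (D - Md)))"
    using even_closed[OF two_NMd _ cls_D] cls_vert by blast
  have e2: "even (card (?A \<inter> Md))"
  proof (rule invol_even)
    show "finite (?A \<inter> Md)" using fA by simp
    show "\<forall>x\<in>?A \<inter> Md. \<alpha> x \<in> ?A \<inter> Md \<and> \<alpha> x \<noteq> x \<and> \<alpha> (\<alpha> x) = x"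
    proof
      fix x assume x: "x \<in> ?A \<inter> Md"
      then have xD: "x \<in> D" using cls_D by blast
      have "x \<noteq> m0" using x nm by blast
      then show "\<alpha> x \<in> ?A \<inter> Md \<and> \<alpha> x \<noteq> x \<and> \<alpha> (\<alpha> x) = x"
        using cls_alpha[OF nb m0, of x] x Md_a a_ne[OF xD] aa[OF xD] by blast
    qed
  qed
  have "card ?A = card (?A \<inter> (D - Md)) + card (?A \<inter> Md)"
  proof -
    have "?A = (?A \<inter> (D - Md)) \<union> (?A \<inter> Md)" using cls_D by blast
    moreover have "(?A \<inter> (D - Md)) \<inter> (?A \<inter> Md) = {}" by blast
    ultimately show ?thesis using fA card_Un_disjoint[of "?A \<inter> (D - Md)" "?A \<inter> Md"]
      by simp
  qed
  then show False using oA e1 e2 by simp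
qed

lemma no_factor:
  assumes nb: "(m0, \<alpha> m0) \<notin> dart_conn D \<alpha> \<sigma> (D - {m0, \<alpha> m0})" and m0: "m0 \<in> D"
    and F: "F \<subseteq> D" "\<forall>x\<in>F. \<alpha> x \<in> F" "Md \<subseteq> F" "\<forall>d\<in>D. card (vert \<sigma> d \<inter> F) = 2"
  shows False
proof -
  have mF: "m0 \<in> F" using bridge_in_Md[OF nb m0] F by blast
  have "odd (card (cls m0 \<inter> F))"
    using odd_Y[OF nb m0, of "cls m0 \<inter> F"] cls_self[OF m0] cls_alpha[OF nb m0] mF F(2) by blast
  moreover have "even (card (cls m0 \<inter> F))"
    using even_closed[OF F(4) F(1) cls_D] cls_vert by blast
  ultimately show False by simp
qed

end


context tm
begin

lemma Md_sigma: "m \<in> Md \<Longrightarrow> \<sigma> m \<in> D - Md \<and> \<sigma> (\<sigma> m) \<in> D - Md"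
proof -
  assume m: "m \<in> Md"
  have mD: "m \<in> D" using m Md_D by blast
  have "\<sigma> m \<notin> Md"
  proof
    assume "\<sigma> m \<in> Md"
    then have "\<sigma> m = m" using md_unique[OF mD _ svert m self_vert] by blast
    then show False using s_ne mD by blast
  qed
  moreover have "\<sigma> (\<sigma> m) \<notin> Md"
  proof
    assume "\<sigma> (\<sigma> m) \<in> Md"
    then have "\<sigma> (\<sigma> m) = m" using md_unique[OF mD _ ssvert m self_vert] by blast
    then show False using s2_ne mD by blast
  qed
  ultimately show ?thesis using s_in mD by blast
qed

lemma N_vert: "m \<in> Md \<Longrightarrow> y \<in> D - Md \<Longrightarrow> y \<in> vert \<sigma> m \<Longrightarrow> y = \<sigma> m \<or> y = \<sigma> (\<sigma> m)"
  unfolding vert_def by auto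

lemma mdart_vert: "m \<in> Md \<Longrightarrow> y \<in> vert \<sigma> m \<Longrightarrow> mdart \<sigma> Md y = m"
proof -
  assume m: "m \<in> Md" "y \<in> vert \<sigma> m"
  have mD: "m \<in> D" using m Md_D by blast
  have yD: "y \<in> D" using vert_D[OF mD] m by blast
  have "vert \<sigma> y = vert \<sigma> m" using vert_eq[OF mD m(2)] .
  then have "m \<in> vert \<sigma> y" using self_vert by simp
  then show ?thesis using mdart_eq[OF yD m(1)] by simp
qed

abbreviation rho where "rho S \<equiv> res_partner \<alpha> \<sigma> Md S"

lemma rho_facts:
  assumes x: "x \<in> D - Md"
  shows "rho S x \<in> D - Md \<and> rho S x \<in> vert \<sigma> (\<alpha> (mdart \<sigma> Md x)) \<and> rho S (rho S x) = x \<and> rho S x \<noteq> x"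
proof -
  define m where "m = mdart \<sigma> Md x"
  have m: "m \<in> Md" "m \<in> vert \<sigma> x" using mdart_in x unfolding m_def by auto
  have mD: "m \<in> D" using m Md_D by blast
  have am: "\<alpha> m \<in> Md" using Md_a m by blast
  have amD: "\<alpha> m \<in> D" using am Md_D by blast
  have aam: "\<alpha> (\<alpha> m) = m" using aa mD by blast
  have xc: "x = \<sigma> m \<or> x = \<sigma> (\<sigma> m)" using N_cases x unfolding m_def by blast
  have n1: "\<sigma> (\<sigma> m) \<noteq> \<sigma> m" using s2_ne1 mD by blast
  have n2: "\<sigma> (\<sigma> (\<alpha> m)) \<noteq> \<sigma> (\<alpha> m)" using s2_ne1 amD by blast
  have ee: "{\<alpha> m, \<alpha> (\<alpha> m)} = {m, \<alpha> m}" using aam by auto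
  have ee2: "{\<alpha> m, m} = {m, \<alpha> m}" by auto
  have N1: "\<sigma> (\<alpha> m) \<in> D - Md" "\<sigma> (\<sigma> (\<alpha> m)) \<in> D - Md" using Md_sigma[OF am] by auto
  have md1: "mdart \<sigma> Md (\<sigma> (\<alpha> m)) = \<alpha> m" "mdart \<sigma> Md (\<sigma> (\<sigma> (\<alpha> m))) = \<alpha> m"
    using mdart_vert[OF am] svert ssvert by auto
  have rx: "rho S x = (if x = \<sigma> m then (if {m, \<alpha> m} \<in> S then \<sigma> (\<alpha> m) else \<sigma> (\<sigma> (\<alpha> m)))
      else (if {m, \<alpha> m} \<in> S then \<sigma> (\<sigma> (\<alpha> m)) else \<sigma> (\<alpha> m)))"
    unfolding res_partner_def Let_def m_def[symmetric] by simp
  have r1: "rho S (\<sigma> (\<alpha> m)) = (if {m, \<alpha> m} \<in> S then \<sigma> m else \<sigma> (\<sigma> m))"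
    unfolding res_partner_def Let_def md1 ee aam by (simp add: ee2)
  have r2: "rho S (\<sigma> (\<sigma> (\<alpha> m))) = (if {m, \<alpha> m} \<in> S then \<sigma> (\<sigma> m) else \<sigma> m)"
    unfolding res_partner_def Let_def md1 ee aam using n2 by (simp add: ee2)
  have inv: "rho S (rho S x) = x"
    using xc
  proof
    assume "x = \<sigma> m" then show ?thesis using rx r1 r2 by auto
  next
    assume "x = \<sigma> (\<sigma> m)" then show ?thesis using rx r1 r2 n1 by auto
  qed
  have rin: "rho S x \<in> D - Md \<and> rho S x \<in> vert \<sigma> (\<alpha> m)"
    using rx N1 svert ssvert by auto
  have xv: "x \<in> vert \<sigma> m" using xc svert ssvert by auto
  have "rho S x \<noteq> x" using rin xv vert_disj[OF m(1)] by metis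
  then show ?thesis using rin inv unfolding m_def by blast
qed

lemma dc_cl:
  assumes "R \<subseteq> dart_conn D \<alpha> \<sigma> E"
  shows "(R \<union> R\<inverse>)\<^sup>* \<subseteq> dart_conn D \<alpha> \<sigma> E"
proof -
  have RC2: "R \<union> R\<inverse> \<subseteq> dart_conn D \<alpha> \<sigma> E" using assms dc_sym by blast
  have "(u, v) \<in> dart_conn D \<alpha> \<sigma> E" if "(u, v) \<in> (R \<union> R\<inverse>)\<^sup>*" for u v
    using that
  proof (induction rule: rtrancl_induct)
    case base then show ?case by (rule dc_refl)
  next
    case (step y z) then show ?case using RC2 dc_trans by blast
  qed
  then show ?thesis by auto
qed

definition R0 :: "'d set \<Rightarrow> 'd set set \<Rightarrow> ('d \<times> 'd) set" where
  "R0 Q S = {(x, \<alpha> x) | x. x \<in> D - Md} \<union> {(x, rho S x) | x. x \<in> D - Md - Q}"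

definition Rel :: "'d set set \<Rightarrow> ('d \<times> 'd) set" where
  "Rel S = {(x, \<alpha> x) | x. x \<in> D - Md} \<union> {(x, rho S x) | x. x \<in> D - Md}"

lemma path_lemma:
  assumes m: "m \<in> Md" and nb: "(m, \<alpha> m) \<notin> dart_conn D \<alpha> \<sigma> (D - {m, \<alpha> m})"
  shows "(\<sigma> m, \<sigma> (\<sigma> m)) \<in> (R0 (vert \<sigma> m \<union> vert \<sigma> (\<alpha> m)) S \<union> (R0 (vert \<sigma> m \<union> vert \<sigma> (\<alpha> m)) S)\<inverse>)\<^sup>*"
    (is "_ \<in> ?cl")
proof (rule ccontr)
  assume ns: "(\<sigma> m, \<sigma> (\<sigma> m)) \<notin> ?cl"
  let ?Q = "vert \<sigma> m \<union> vert \<sigma> (\<alpha> m)"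
  let ?R = "R0 ?Q S"
  let ?E = "D - {m, \<alpha> m}"
  let ?dc = "dart_conn D \<alpha> \<sigma> ?E"
  have mD: "m \<in> D" using m Md_D by blast
  have am: "\<alpha> m \<in> Md" using Md_a m by blast
  have amD: "\<alpha> m \<in> D" using am Md_D by blast
  have sm: "\<sigma> m \<in> D - Md" using Md_sigma[OF m] by blast
  define C where "C = {y \<in> D - Md. (\<sigma> m, y) \<in> ?cl}"
  have fC: "finite C" using finite_subset[OF _ finD, of C] unfolding C_def by blast
  have smC: "\<sigma> m \<in> C" unfolding C_def using sm by blast
  have ssC: "\<sigma> (\<sigma> m) \<notin> C" unfolding C_def using ns by blast
  have Rdc: "?R \<subseteq> ?dc"
  proof
    fix p assume "p \<in> ?R"
    then obtain x where x: "x \<in> D - Md" and p: "p = (x, \<alpha> x) \<or> (x \<notin> ?Q \<and> p = (x, rho S x))"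
      unfolding R0_def by blast
    have "x \<noteq> m" "x \<noteq> \<alpha> m" using x m am by auto
    then have xE: "x \<in> ?E" using x by blast
    show "p \<in> ?dc"
      using p
    proof
      assume "p = (x, \<alpha> x)" then show ?thesis using dc_a[OF xE] by simp
    next
      assume h: "x \<notin> ?Q \<and> p = (x, rho S x)"
      define m' where "m' = mdart \<sigma> Md x"
      have m': "m' \<in> Md" "m' \<in> vert \<sigma> x" using mdart_in x unfolding m'_def by auto
      have m'D: "m' \<in> D" using m' Md_D by blast
      have xv: "x \<in> vert \<sigma> m'" using vert_eq[OF _ m'(2)] x self_vert by blast
      have "m' \<noteq> m" "m' \<noteq> \<alpha> m" using xv h by auto
      then have m'E: "m' \<in> ?E" using m'D by blast
      have 1: "(x, m') \<in> ?dc" using dc_vert x m'(2) by blast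
      have 2: "(m', \<alpha> m') \<in> ?dc" using dc_a[OF m'E] .
      have rv: "rho S x \<in> vert \<sigma> (\<alpha> m')" using rho_facts[OF x] unfolding m'_def by blast
      have 3: "(\<alpha> m', rho S x) \<in> ?dc" using dc_vert[OF a_in[OF m'D] rv] .
      show ?thesis using dc_trans[OF dc_trans[OF 1 2] 3] h by simp
    qed
  qed
  have cldc: "?cl \<subseteq> ?dc" using dc_cl[OF Rdc] .
  have Ccls: "C \<subseteq> cls m"
  proof
    fix y assume y: "y \<in> C"
    then have "(\<sigma> m, y) \<in> ?dc" using cldc unfolding C_def by blast
    then have "(m, y) \<in> ?dc" using dc_trans[OF dc_s[OF mD]] by blast
    then show "y \<in> cls m" using y unfolding C_def cls_def by blast
  qed
  have clsam: "y \<notin> vert \<sigma> (\<alpha> m)" if "y \<in> cls m" for y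
  proof
    assume yv: "y \<in> vert \<sigma> (\<alpha> m)"
    have yD: "y \<in> D" and my: "(m, y) \<in> ?dc" using that unfolding cls_def by auto
    have "vert \<sigma> y = vert \<sigma> (\<alpha> m)" using vert_eq[OF amD yv] .
    then have "\<alpha> m \<in> vert \<sigma> y" using self_vert by simp
    then have "(y, \<alpha> m) \<in> ?dc" using dc_vert[OF yD] by blast
    then show False using dc_trans[OF my] nb by blast
  qed
  have eC: "even (card C)"
  proof (rule invol_even[where f = \<alpha>])
    show "finite C" by (rule fC)
    show "\<forall>x\<in>C. \<alpha> x \<in> C \<and> \<alpha> x \<noteq> x \<and> \<alpha> (\<alpha> x) = x"
    proof
      fix x assume x: "x \<in> C"
      then have xN: "x \<in> D - Md" and cx: "(\<sigma> m, x) \<in> ?cl" unfolding C_def by auto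
      have "(x, \<alpha> x) \<in> ?R" unfolding R0_def using xN by blast
      then have "(x, \<alpha> x) \<in> ?cl" by blast
      then have "(\<sigma> m, \<alpha> x) \<in> ?cl" using cx by (meson rtrancl_trans)
      then have "\<alpha> x \<in> C" unfolding C_def using N_a[OF xN] by blast
      then show "\<alpha> x \<in> C \<and> \<alpha> x \<noteq> x \<and> \<alpha> (\<alpha> x) = x" using a_ne aa xN by blast
    qed
  qed
  have eC2: "even (card (C - {\<sigma> m}))"
  proof (rule invol_even[where f = "rho S"])
    show "finite (C - {\<sigma> m})" using fC by simp
    show "\<forall>x\<in>C - {\<sigma> m}. rho S x \<in> C - {\<sigma> m} \<and> rho S x \<noteq> x \<and> rho S (rho S x) = x"
    proof
      fix x assume x: "x \<in> C - {\<sigma> m}"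
      then have xN: "x \<in> D - Md" and cx: "(\<sigma> m, x) \<in> ?cl" unfolding C_def by auto
      have xam: "x \<notin> vert \<sigma> (\<alpha> m)" using clsam Ccls x by blast
      have xm: "x \<notin> vert \<sigma> m"
      proof
        assume "x \<in> vert \<sigma> m"
        then have "x = \<sigma> m \<or> x = \<sigma> (\<sigma> m)" using N_vert[OF m xN] by blast
        then show False using x ssC by blast
      qed
      have rf: "rho S x \<in> D - Md" "rho S (rho S x) = x" "rho S x \<noteq> x" using rho_facts[OF xN] by auto
      have "(x, rho S x) \<in> ?R" unfolding R0_def using xN xam xm by blast
      then have "(x, rho S x) \<in> ?cl" by blast
      then have "(\<sigma> m, rho S x) \<in> ?cl" using cx by (meson rtrancl_trans)
      then have rC: "rho S x \<in> C" unfolding C_def using rf by blast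
      have "rho S x \<noteq> \<sigma> m"
      proof
        assume h: "rho S x = \<sigma> m"
        have "rho S (\<sigma> m) \<in> vert \<sigma> (\<alpha> (mdart \<sigma> Md (\<sigma> m)))" using rho_facts[OF sm] by blast
        moreover have "mdart \<sigma> Md (\<sigma> m) = m" using mdart_vert[OF m svert] .
        ultimately have "x \<in> vert \<sigma> (\<alpha> m)" using h rf by simp
        then show False using xam by blast
      qed
      then show "rho S x \<in> C - {\<sigma> m} \<and> rho S x \<noteq> x \<and> rho S (rho S x) = x" using rC rf by blast
    qed
  qed
  have "card C = Suc (card (C - {\<sigma> m}))" using card_Suc_Diff1[OF fC smC] by simp
  then show False using eC eC2 by simp
qed

end


lemma sum_pow_cancel:
  fixes g :: "'a set \<Rightarrow> real"
  assumes fA: "finite A" and eA: "e \<notin> A" and neg: "\<And>S. S \<subseteq> A \<Longrightarrow> g (insert e S) = - g S"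
  shows "(\<Sum>S\<in>Pow (insert e A). g S) = 0"
proof -
  have fP: "finite (Pow A)" using fA by simp
  have disj: "Pow A \<inter> insert e ` Pow A = {}" using eA by auto
  have inj: "inj_on (insert e) (Pow A)"
  proof (rule inj_onI)
    fix S T assume "S \<in> Pow A" "T \<in> Pow A" "insert e S = insert e T"
    moreover have "e \<notin> S" "e \<notin> T" using eA \<open>S \<in> Pow A\<close> \<open>T \<in> Pow A\<close> by auto
    ultimately show "S = T" using insert_ident by metis
  qed
  have "(\<Sum>S\<in>Pow (insert e A). g S) = (\<Sum>S\<in>Pow A. g S) + (\<Sum>S\<in>insert e ` Pow A. g S)"
    unfolding Pow_insert by (rule sum.union_disjoint) (use fP disj in auto)
  also have "(\<Sum>S\<in>insert e ` Pow A. g S) = (\<Sum>S\<in>Pow A. g (insert e S))"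
    using sum.reindex[OF inj] by simp
  also have "\<dots> = (\<Sum>S\<in>Pow A. - g S)" using neg by (intro sum.cong) auto
  finally show ?thesis by (simp add: sum_negf)
qed

context tm
begin

lemma R0_Rel: "R0 Q S \<subseteq> Rel S" unfolding R0_def Rel_def by blast

lemma all_Q:
  assumes m: "m \<in> Md" and nb: "(m, \<alpha> m) \<notin> dart_conn D \<alpha> \<sigma> (D - {m, \<alpha> m})"
    and x: "x \<in> (D - Md) \<inter> (vert \<sigma> m \<union> vert \<sigma> (\<alpha> m))"
    and y: "y \<in> (D - Md) \<inter> (vert \<sigma> m \<union> vert \<sigma> (\<alpha> m))"
  shows "(x, y) \<in> (Rel S \<union> (Rel S)\<inverse>)\<^sup>*"
proof -
  let ?Q = "vert \<sigma> m \<union> vert \<sigma> (\<alpha> m)"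
  let ?T = "(Rel S \<union> (Rel S)\<inverse>)\<^sup>*"
  have mD: "m \<in> D" using m Md_D by blast
  have am: "\<alpha> m \<in> Md" using Md_a m by blast
  have aam: "\<alpha> (\<alpha> m) = m" using aa mD by blast
  have mono: "(R0 ?Q S \<union> (R0 ?Q S)\<inverse>)\<^sup>* \<subseteq> ?T"
    by (rule rtrancl_mono) (use R0_Rel in blast)
  have p1: "(\<sigma> m, \<sigma> (\<sigma> m)) \<in> ?T" using path_lemma[OF m nb] mono by blast
  have nb2: "(\<alpha> m, \<alpha> (\<alpha> m)) \<notin> dart_conn D \<alpha> \<sigma> (D - {\<alpha> m, \<alpha> (\<alpha> m)})"
  proof -
    have e: "{\<alpha> m, \<alpha> (\<alpha> m)} = {m, \<alpha> m}" using aam by auto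
    have "(\<alpha> m, m) \<notin> dart_conn D \<alpha> \<sigma> (D - {m, \<alpha> m})" using nb dc_sym by blast
    have e2: "{\<alpha> m, m} = {m, \<alpha> m}" by auto
    show ?thesis unfolding aam e2 by fact
  qed
  have Qeq: "vert \<sigma> (\<alpha> m) \<union> vert \<sigma> (\<alpha> (\<alpha> m)) = ?Q" using aam by auto
  have p2: "(\<sigma> (\<alpha> m), \<sigma> (\<sigma> (\<alpha> m))) \<in> ?T" using path_lemma[OF am nb2, of S] mono unfolding Qeq by blast
  have sm: "\<sigma> m \<in> D - Md" using Md_sigma[OF m] by blast
  have rs: "(\<sigma> m, rho S (\<sigma> m)) \<in> ?T" unfolding Rel_def using sm by blast
  have "rho S (\<sigma> m) \<in> D - Md" "rho S (\<sigma> m) \<in> vert \<sigma> (\<alpha> (mdart \<sigma> Md (\<sigma> m)))" using rho_facts[OF sm] by auto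
  moreover have "mdart \<sigma> Md (\<sigma> m) = m" using mdart_vert[OF m svert] .
  ultimately have "rho S (\<sigma> m) = \<sigma> (\<alpha> m) \<or> rho S (\<sigma> m) = \<sigma> (\<sigma> (\<alpha> m))" using N_vert[OF am] by simp
  then have p3: "(\<sigma> m, \<sigma> (\<alpha> m)) \<in> ?T \<and> (\<sigma> m, \<sigma> (\<sigma> (\<alpha> m))) \<in> ?T"
  proof
    assume "rho S (\<sigma> m) = \<sigma> (\<alpha> m)"
    then show ?thesis using rs rtrancl_trans[OF rs[unfolded \<open>rho S (\<sigma> m) = \<sigma> (\<alpha> m)\<close>] p2] by simp
  next
    assume "rho S (\<sigma> m) = \<sigma> (\<sigma> (\<alpha> m))"
    then show ?thesis using rs rtrancl_trans[OF rs[unfolded \<open>rho S (\<sigma> m) = \<sigma> (\<sigma> (\<alpha> m))\<close>] sym_cl[OF p2]] by simp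
  qed
  have all: "(\<sigma> m, z) \<in> ?T" if z: "z \<in> (D - Md) \<inter> ?Q" for z
  proof -
    have "z = \<sigma> m \<or> z = \<sigma> (\<sigma> m) \<or> z = \<sigma> (\<alpha> m) \<or> z = \<sigma> (\<sigma> (\<alpha> m))"
      using z N_vert[OF m] N_vert[OF am] by blast
    then show ?thesis using p1 p3 by auto
  qed
  show ?thesis using rtrancl_trans[OF sym_cl[OF all[OF x]] all[OF y]] .
qed

lemma cl_sub:
  assumes m: "m \<in> Md" and nb: "(m, \<alpha> m) \<notin> dart_conn D \<alpha> \<sigma> (D - {m, \<alpha> m})"
    and agree: "\<forall>x\<in>D - Md - (vert \<sigma> m \<union> vert \<sigma> (\<alpha> m)). rho S1 x = rho S2 x"
  shows "(Rel S1 \<union> (Rel S1)\<inverse>)\<^sup>* \<subseteq> (Rel S2 \<union> (Rel S2)\<inverse>)\<^sup>*"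
proof -
  let ?Q = "vert \<sigma> m \<union> vert \<sigma> (\<alpha> m)"
  let ?T = "(Rel S2 \<union> (Rel S2)\<inverse>)\<^sup>*"
  have mD: "m \<in> D" using m Md_D by blast
  have am: "\<alpha> m \<in> Md" using Md_a m by blast
  have aam: "\<alpha> (\<alpha> m) = m" using aa mD by blast
  have "Rel S1 \<subseteq> ?T"
  proof
    fix p assume "p \<in> Rel S1"
    then obtain x where x: "x \<in> D - Md" and p: "p = (x, \<alpha> x) \<or> p = (x, rho S1 x)"
      unfolding Rel_def by blast
    show "p \<in> ?T" using p
    proof
      assume "p = (x, \<alpha> x)" then show ?thesis unfolding Rel_def using x by blast
    next
      assume p: "p = (x, rho S1 x)"
      show ?thesis
      proof (cases "x \<in> ?Q")
        case False
        then have "rho S1 x = rho S2 x" using agree x by blast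
        then show ?thesis unfolding Rel_def using x p by blast
      next
        case True
        have rf: "rho S1 x \<in> D - Md" "rho S1 x \<in> vert \<sigma> (\<alpha> (mdart \<sigma> Md x))" using rho_facts[OF x] by auto
        have "rho S1 x \<in> ?Q"
        proof (cases "x \<in> vert \<sigma> m")
          case True
          then have "mdart \<sigma> Md x = m" using mdart_vert[OF m] by blast
          then show ?thesis using rf by simp
        next
          case False
          then have "x \<in> vert \<sigma> (\<alpha> m)" using \<open>x \<in> ?Q\<close> by blast
          then have "mdart \<sigma> Md x = \<alpha> m" using mdart_vert[OF am] by blast
          then show ?thesis using rf aam by simp
        qed
        moreover have "x \<in> (D - Md) \<inter> ?Q" using x True by blast
        ultimately have "(x, rho S1 x) \<in> ?T" using all_Q[OF m nb, of x "rho S1 x" S2] rf(1) by blast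
        then show ?thesis using p by simp
      qed
    qed
  qed
  then have "Rel S1 \<union> (Rel S1)\<inverse> \<subseteq> ?T"
  proof -
    assume h: "Rel S1 \<subseteq> ?T"
    show ?thesis
    proof
      fix p assume "p \<in> Rel S1 \<union> (Rel S1)\<inverse>"
      then show "p \<in> ?T"
      proof
        assume "p \<in> Rel S1" then show ?thesis using h by blast
      next
        assume "p \<in> (Rel S1)\<inverse>"
        then obtain u v where p: "p = (u, v)" "(v, u) \<in> Rel S1" by blast
        then have "(v, u) \<in> ?T" using h by blast
        then show ?thesis using sym_cl p(1) by simp
      qed
    qed
  qed
  then show ?thesis by (rule rtrancl_subset_rtrancl)
qed

lemma agree:
  assumes m: "m \<in> Md"
  shows "\<forall>x\<in>D - Md - (vert \<sigma> m \<union> vert \<sigma> (\<alpha> m)). rho (insert {m, \<alpha> m} S) x = rho (S - {{m, \<alpha> m}}) x"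
proof
  fix x assume x: "x \<in> D - Md - (vert \<sigma> m \<union> vert \<sigma> (\<alpha> m))"
  define m' where "m' = mdart \<sigma> Md x"
  have m': "m' \<in> Md" "m' \<in> vert \<sigma> x" using mdart_in x unfolding m'_def by auto
  have xv: "x \<in> vert \<sigma> m'" using vert_eq[OF _ m'(2)] x self_vert by blast
  have "m' \<noteq> m" "m' \<noteq> \<alpha> m" using xv x by auto
  then have "{m', \<alpha> m'} \<noteq> {m, \<alpha> m}"
  proof -
    assume ne: "m' \<noteq> m" "m' \<noteq> \<alpha> m"
    show ?thesis
    proof
      assume "{m', \<alpha> m'} = {m, \<alpha> m}"
      then have "m' \<in> {m, \<alpha> m}" by blast
      then show False using ne by blast
    qed
  qed
  then have iff: "({m', \<alpha> m'} \<in> insert {m, \<alpha> m} S) = ({m', \<alpha> m'} \<in> S - {{m, \<alpha> m}})" by auto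
  show "rho (insert {m, \<alpha> m} S) x = rho (S - {{m, \<alpha> m}}) x"
    unfolding res_partner_def Let_def m'_def[symmetric] using iff by simp
qed

lemma nc_Rel: "num_curves D \<alpha> \<sigma> Md S = card ((D - Md) // ((Rel S \<union> (Rel S)\<inverse>)\<^sup>*))"
  unfolding num_curves_def Let_def Rel_def by simp

lemma curves_eq:
  assumes m: "m \<in> Md" and nb: "(m, \<alpha> m) \<notin> dart_conn D \<alpha> \<sigma> (D - {m, \<alpha> m})"
  shows "num_curves D \<alpha> \<sigma> Md (insert {m, \<alpha> m} S) = num_curves D \<alpha> \<sigma> Md (S - {{m, \<alpha> m}})"
proof -
  have a1: "\<forall>x\<in>D - Md - (vert \<sigma> m \<union> vert \<sigma> (\<alpha> m)). rho (S - {{m, \<alpha> m}}) x = rho (insert {m, \<alpha> m} S) x"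
    using agree[OF m] by simp
  have "(Rel (insert {m, \<alpha> m} S) \<union> (Rel (insert {m, \<alpha> m} S))\<inverse>)\<^sup>* = (Rel (S - {{m, \<alpha> m}}) \<union> (Rel (S - {{m, \<alpha> m}}))\<inverse>)\<^sup>*"
    using cl_sub[OF m nb agree[OF m]] cl_sub[OF m nb a1] by (rule subset_antisym)
  then show ?thesis unfolding nc_Rel by simp
qed

end

theorem lemma2p6:
  fixes D :: "'d set" and \<alpha> \<sigma> :: "'d \<Rightarrow> 'd" and Md :: "'d set"
  assumes "trivalent_map D \<alpha> \<sigma>"
    and "connected_map D \<alpha> \<sigma>"
    and "planar_map D \<alpha> \<sigma>"
    and "perfect_matching D \<alpha> \<sigma> Md"
    and "has_bridge D \<alpha> \<sigma>"
  shows "two_factor_poly D \<alpha> \<sigma> Md 1 = 0 \<and> two_factor_count D \<alpha> \<sigma> Md = 0"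
proof -
  interpret tm D \<alpha> \<sigma> Md using assms(1,4) by unfold_locales
  obtain m x y where mD: "m \<in> D" and xy: "x \<in> D" "y \<in> D"
    and nc: "(x, y) \<notin> dart_conn D \<alpha> \<sigma> (D - {m, \<alpha> m})"
    using assms(5) unfolding has_bridge_def by blast
  have nb: "(m, \<alpha> m) \<notin> dart_conn D \<alpha> \<sigma> (D - {m, \<alpha> m})" using bridge_sep[OF assms(2) mD xy nc] .
  have m: "m \<in> Md" using bridge_in_Md[OF nb mD] .
  have c0: "two_factor_count D \<alpha> \<sigma> Md = 0"
  proof -
    have "{F. F \<subseteq> D \<and> (\<forall>x\<in>F. \<alpha> x \<in> F) \<and> Md \<subseteq> F \<and> (\<forall>d\<in>D. card (vert \<sigma> d \<inter> F) = 2)} = {}"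
      using no_factor[OF nb mD] by blast
    then show ?thesis unfolding two_factor_count_def by (simp only: card.empty)
  qed
  let ?e = "{m, \<alpha> m}"
  let ?ME = "match_edges \<alpha> Md"
  have fMd: "finite Md" using finite_subset[OF Md_D finD] .
  have fME: "finite ?ME"
  proof -
    have "?ME = (\<lambda>d. {d, \<alpha> d}) ` Md" unfolding match_edges_def by blast
    then show ?thesis using fMd by simp
  qed
  have eME: "?e \<in> ?ME" unfolding match_edges_def using m by blast
  have MEeq: "?ME = insert ?e (?ME - {?e})" using eME by blast
  define g where "g S = (- (1::real)) ^ card S * 2 ^ num_curves D \<alpha> \<sigma> Md S" for S
  have "two_factor_poly D \<alpha> \<sigma> Md 1 = (\<Sum>S\<in>Pow ?ME. g S)"
    unfolding two_factor_poly_def g_def by simp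
  also have "\<dots> = (\<Sum>S\<in>Pow (insert ?e (?ME - {?e})). g S)" using MEeq by simp
  also have "\<dots> = 0"
  proof (rule sum_pow_cancel)
    show "finite (?ME - {?e})" using fME by simp
    show "?e \<notin> ?ME - {?e}" by simp
    fix S assume S: "S \<subseteq> ?ME - {?e}"
    have fS: "finite S" using finite_subset[OF S] fME by simp
    have eS: "?e \<notin> S" using S by blast
    have "card (insert ?e S) = Suc (card S)" using fS eS by simp
    moreover have "num_curves D \<alpha> \<sigma> Md (insert ?e S) = num_curves D \<alpha> \<sigma> Md S"
      using curves_eq[OF m nb, of S] eS by simp
    ultimately show "g (insert ?e S) = - g S" unfolding g_def by simp
  qed
  finally show ?thesis using c0 by simp
qed

end
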